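(* Let $L,L'$ be combinatorial tilings locally isomorphic to $K$, let $x\in L_{\mathrm{aff}}$, $x'\in L'_{\mathrm{aff}}$ and $0<\varepsilon\le 1/\sqrt2$. Let $\phi:B(x,\varepsilon^{-1},L)\to L'_{\mathrm{aff}}$ and $\phi':B(x',\varepsilon^{-1},L')\to L_{\mathrm{aff}}$ be continuous cell-preserving maps whose restriction to each cell is an isometry, such that $d(\phi(x),x')\le\varepsilon$, $d(\phi'(x'),x)\le\varepsilon$, and $\phi\circ\phi'=\mathrm{id}$ and $\phi'\circ\phi=\mathrm{id}$ wherever these compositions are defined. Then the restriction of $\phi$ to $B(x,\varepsilon^{-1}/6,L)$ is an isometry.
   Context: A combinatorial tiling is a 2-dimensional CW-complex homeomorphic to the plane. The combinatorial pentagonal tiling $K$ is the direct limit $K=\varinjlim K_n$, where $K_0$ is a decorated combinatorial pentagon (a closed disk with five distinguished boundary points), $K_n=\omega^n(K_0)$ for the pentagonal subdivision rule $\omega$ (each pentagon is replaced by six pentagons: a central one and a ring of five, each edge split in two, decorations of subtiles prescribed by the rule), and the embeddings $K_n\to K_{n+1}$ send central pentagon to central pentagon. $L$ is locally isomorphic to $K$ if every finite patch of $L$ is isomorphic by a cell-preserving decoration-preserving isomorphism to a patch of $K$. $L_{\mathrm{aff}}$ is $L$ with each edge isometric to $[0,1]$ and each face isometric to a Euclidean regular pentagon of side $1$, with $d$ the shortest-path length metric. $B(x,r,L)=\{y\in L_{\mathrm{aff}}: d(x,y)\le r\}$ is the metric ball. *)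

theory Defs
  imports "HOL-Analysis.Analysis" "HOL-Library.FSet"
begin

section \<open>The model regular pentagon of side 1\<close>

definition pent_r :: real where "pent_r = 1 / (2 * sin (pi / 5))"

definition ck :: "nat \<Rightarrow> complex" where
  "ck k = complex_of_real pent_r * cis (2 * pi * real k / 5)"

definition Pent :: "complex set" where
  "Pent = convex hull (ck ` {0..<5})"

text \<open>A tiling is given by a set of face indices and, for each face, the cyclic
 list of its five boundary vertices.\<close>
type_synonym ('v, 'f) tiling = "'f set \<times> ('f \<Rightarrow> 'v list)"

text \<open>Points of the affine realisation: vertices, interior points of edges
 (recorded canonically by the distances to both endpoints), interior points of faces.\<close>
datatype ('v, 'f) apt = PV 'v | PE "('v \<times> real) set" | PF 'f complex

definition cdim :: "('v, 'f) apt \<Rightarrow> nat" where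
  "cdim p = (case p of PV _ \<Rightarrow> 0 | PE _ \<Rightarrow> 1 | PF _ _ \<Rightarrow> 2)"

definition pt :: "('f \<Rightarrow> 'v list) \<Rightarrow> 'f \<Rightarrow> complex \<Rightarrow> ('v, 'f) apt" where
  "pt bd f z =
    (if \<exists>k<5. z = ck k then PV (bd f ! (SOME k. k < 5 \<and> z = ck k))
     else if \<exists>k<5. z \<in> open_segment (ck k) (ck (Suc k mod 5)) then
       (let k = (SOME k. k < 5 \<and> z \<in> open_segment (ck k) (ck (Suc k mod 5)))
        in PE {(bd f ! k, dist z (ck k)), (bd f ! (Suc k mod 5), dist z (ck (Suc k mod 5)))})
     else PF f z)"

definition Pts :: "('v, 'f) tiling \<Rightarrow> ('v, 'f) apt set" where
  "Pts L = {pt (snd L) f z | f z. f \<in> fst L \<and> z \<in> Pent}"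

definition cw_top :: "('v, 'f) tiling \<Rightarrow> ('v, 'f) apt topology" where
  "cw_top L = topology (\<lambda>U. U \<subseteq> Pts L \<and>
      (\<forall>f \<in> fst L. openin (top_of_set Pent) {z \<in> Pent. pt (snd L) f z \<in> U}))"

definition pent_tiling :: "('v, 'f) tiling \<Rightarrow> bool" where
  "pent_tiling L \<longleftrightarrow> (\<forall>f \<in> fst L. length (snd L f) = 5 \<and> distinct (snd L f))
     \<and> cw_top L homeomorphic_space (euclidean :: complex topology)"

text \<open>Strings in the sense of Bridson--Haefliger: sequences of straight segments,
 each inside one closed face.\<close>
fun chain :: "('v, 'f) tiling \<Rightarrow> ('v, 'f) apt \<Rightarrow> ('v, 'f) apt
      \<Rightarrow> ('f \<times> complex \<times> complex) list \<Rightarrow> bool" where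
  "chain L x y [] \<longleftrightarrow> x = y"
| "chain L x y ((f, z, w) # cs) \<longleftrightarrow>
     f \<in> fst L \<and> z \<in> Pent \<and> w \<in> Pent \<and> pt (snd L) f z = x \<and> chain L (pt (snd L) f w) y cs"

definition chain_len :: "('f \<times> complex \<times> complex) list \<Rightarrow> real" where
  "chain_len cs = sum_list (map (\<lambda>(f, z, w). dist z w) cs)"

definition adist :: "('v, 'f) tiling \<Rightarrow> ('v, 'f) apt \<Rightarrow> ('v, 'f) apt \<Rightarrow> real" where
  "adist L x y = Inf {chain_len cs | cs. chain L x y cs}"

definition aball :: "('v, 'f) tiling \<Rightarrow> ('v, 'f) apt \<Rightarrow> real \<Rightarrow> ('v, 'f) apt set" where
  "aball L x r = {y \<in> Pts L. adist L x y \<le> r}"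

definition dihedral_eq :: "'a list \<Rightarrow> 'a list \<Rightarrow> bool" where
  "dihedral_eq xs ys \<longleftrightarrow> (\<exists>k. ys = rotate k xs \<or> ys = rotate k (rev xs))"

definition patch_verts :: "('f \<Rightarrow> 'v list) \<Rightarrow> 'f set \<Rightarrow> 'v set" where
  "patch_verts bd P = (\<Union>f \<in> P. set (bd f))"

text \<open>Cell-preserving isomorphism between the patch P of (bd1) and the patch Q of (bd2).
 (Decorations = the five corner points, which are the vertices, hence automatically preserved.)\<close>
definition patch_iso :: "('f1 \<Rightarrow> 'v1 list) \<Rightarrow> 'f1 set \<Rightarrow> ('f2 \<Rightarrow> 'v2 list) \<Rightarrow> 'f2 set \<Rightarrow> bool" where
  "patch_iso bd1 P bd2 Q \<longleftrightarrow> (\<exists>\<sigma> \<psi>. bij_betw \<sigma> P Q \<and> inj_on \<psi> (patch_verts bd1 P) \<and>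
       (\<forall>f \<in> P. dihedral_eq (map \<psi> (bd1 f)) (bd2 (\<sigma> f))))"

text \<open>Vertices of the complexes K_n = omega^n(K_0): corners of K_0, midpoints of edges
 (named by the unordered pair of endpoints), and the five inner vertices of a subdivided face
 (named by the address of that face).\<close>
datatype vt = V0 nat | Mid "vt fset" | Inn "nat list" nat

text \<open>Subdivision of a pentagon with corners vs and inner vertices c: child 5 is the central
 pentagon, child j<5 is the ring pentagon containing the corner vs!(j+1).\<close>
definition child :: "(nat \<Rightarrow> vt) \<Rightarrow> nat \<Rightarrow> vt list \<Rightarrow> vt list" where
  "child c j vs =
    (if j = 5 then map c [0..<5]
     else [Mid {|vs ! j, vs ! (Suc j mod 5)|}, vs ! (Suc j mod 5),
           Mid {|vs ! (Suc j mod 5), vs ! (Suc (Suc j) mod 5)|},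
           c (Suc j mod 5), c j])"

text \<open>Faces of K_n are addresses w (length n, letters < 6); the head of w is the most recent
 subdivision step.\<close>
fun Kbd :: "nat list \<Rightarrow> vt list" where
  "Kbd [] = map V0 [0..<5]"
| "Kbd (j # w) = child (Inn w) j (Kbd w)"

definition Kfaces :: "nat \<Rightarrow> nat list set" where
  "Kfaces n = {w. length w = n \<and> set w \<subseteq> {0..<6}}"

text \<open>Every finite patch of K lies in (the image of) some K_n.\<close>
definition loc_iso_K :: "('v, 'f) tiling \<Rightarrow> bool" where
  "loc_iso_K L \<longleftrightarrow> (\<forall>P. P \<subseteq> fst L \<and> finite P \<longrightarrow>
      (\<exists>n Q. Q \<subseteq> Kfaces n \<and> patch_iso (snd L) P Kbd Q))"

definition edges :: "('v, 'f) tiling \<Rightarrow> ('v \<times> 'v) set" where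
  "edges L = {(snd L f ! k, snd L f ! (Suc k mod 5)) | f k. f \<in> fst L \<and> k < 5}"

definition epoint :: "'v \<Rightarrow> 'v \<Rightarrow> real \<Rightarrow> ('v, 'f) apt" where
  "epoint a b t = (if t = 0 then PV a else if t = 1 then PV b else PE {(a, t), (b, 1 - t)})"

definition cell_iso_map ::
  "('v1, 'f1) tiling \<Rightarrow> ('v1, 'f1) apt set \<Rightarrow> ('v2, 'f2) tiling
     \<Rightarrow> (('v1, 'f1) apt \<Rightarrow> ('v2, 'f2) apt) \<Rightarrow> bool" where
  "cell_iso_map L D L' \<phi> \<longleftrightarrow>
     (\<forall>y \<in> D. \<phi> y \<in> Pts L' \<and> cdim (\<phi> y) = cdim y) \<and>
     (\<forall>(a, b) \<in> edges L. \<exists>(a', b') \<in> edges L'. \<exists>T. \<forall>s \<in> {0..1}. \<forall>t \<in> {0..1}.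
         epoint a b s \<in> D \<longrightarrow> epoint a b t \<in> D \<longrightarrow>
         T s \<in> {0..1} \<and> \<phi> (epoint a b s) = epoint a' b' (T s) \<and> \<bar>T s - T t\<bar> = \<bar>s - t\<bar>) \<and>
     (\<forall>f \<in> fst L. \<exists>g \<in> fst L'. \<exists>T. \<forall>z \<in> Pent. \<forall>w \<in> Pent.
         pt (snd L) f z \<in> D \<longrightarrow> pt (snd L) f w \<in> D \<longrightarrow>
         T z \<in> Pent \<and> \<phi> (pt (snd L) f z) = pt (snd L') g (T z) \<and> dist (T z) (T w) = dist z w)"

definition acont_on ::
  "('v1, 'f1) tiling \<Rightarrow> ('v1, 'f1) apt set \<Rightarrow> ('v2, 'f2) tiling
     \<Rightarrow> (('v1, 'f1) apt \<Rightarrow> ('v2, 'f2) apt) \<Rightarrow> bool" where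
  "acont_on L D L' \<phi> \<longleftrightarrow> (\<forall>y \<in> D. \<forall>e > 0. \<exists>\<delta> > 0. \<forall>z \<in> D.
       adist L y z < \<delta> \<longrightarrow> adist L' (\<phi> y) (\<phi> z) < e)"

end

theory Submission
  imports Defs
begin

lemma chain_len_Cons[simp]: "chain_len ((f, z, w) # cs) = dist z w + chain_len cs"
  by (simp add: chain_len_def)

lemma chain_len_Nil[simp]: "chain_len [] = 0"
  by (simp add: chain_len_def)

lemma chain_len_append[simp]: "chain_len (cs @ ds) = chain_len cs + chain_len ds"
  by (simp add: chain_len_def)

lemma chain_len_nonneg: "0 \<le> chain_len cs"
  unfolding chain_len_def by (induction cs) auto

lemma chain_append:
  "chain L a b cs \<Longrightarrow> chain L b c ds \<Longrightarrow> chain L a c (cs @ ds)"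
proof (induction cs arbitrary: a)
  case Nil then show ?case by simp
next
  case (Cons e cs)
  obtain f z w where e: "e = (f, z, w)" by (cases e) auto
  show ?case using Cons e by auto
qed

definition rchain :: "('f \<times> complex \<times> complex) list \<Rightarrow> ('f \<times> complex \<times> complex) list" where
  "rchain cs = rev (map (\<lambda>(f, z, w). (f, w, z)) cs)"

lemma chain_rev: "chain L a b cs \<Longrightarrow> chain L b a (rchain cs)"
proof (induction cs arbitrary: a)
  case Nil then show ?case by (simp add: rchain_def)
next
  case (Cons e cs)
  obtain f z w where e: "e = (f, z, w)" by (cases e) auto
  from Cons e have h: "chain L b (pt (snd L) f w) (rchain cs)" by auto
  have "chain L (pt (snd L) f w) a [(f, w, z)]" using Cons e by auto
  from chain_append[OF h this] show ?case using e by (simp add: rchain_def)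
qed

lemma rchain_Nil[simp]: "rchain [] = []"
  by (simp add: rchain_def)

lemma rchain_Cons[simp]: "rchain ((f, z, w) # cs) = rchain cs @ [(f, w, z)]"
  by (simp add: rchain_def)

lemma chain_len_rchain[simp]: "chain_len (rchain cs) = chain_len cs"
proof (induction cs)
  case Nil then show ?case by simp
next
  case (Cons e cs)
  obtain f z w where e: "e = (f, z, w)" by (cases e) auto
  show ?case using Cons e by (simp add: dist_commute)
qed

lemma rchain_rchain[simp]: "rchain (rchain cs) = cs"
  unfolding rchain_def by (induction cs) (auto simp: rev_map)

lemma chain_Pts: "chain L a b cs \<Longrightarrow> a \<in> Pts L \<Longrightarrow> b \<in> Pts L"
proof (induction cs arbitrary: a)
  case Nil then show ?case by simp
next
  case (Cons e cs)
  obtain f z w where e: "e = (f, z, w)" by (cases e) auto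
  have "pt (snd L) f w \<in> Pts L" using Cons.prems e by (auto simp: Pts_def)
  then show ?case using Cons.IH Cons.prems e by auto
qed

lemma chain_split:
  "chain L a b cs \<Longrightarrow> p \<in> insert a ((\<lambda>(f, z, w). pt (snd L) f w) ` set cs) \<Longrightarrow>
   \<exists>ds es. chain L a p ds \<and> chain L p b es \<and> chain_len ds + chain_len es = chain_len cs"
proof (induction cs arbitrary: a)
  case Nil then show ?case by (intro exI[of _ "[]"]) auto
next
  case (Cons e cs)
  obtain f z w where e: "e = (f, z, w)" by (cases e) auto
  show ?case
  proof (cases "p = a")
    case True
    then show ?thesis using Cons by (intro exI[of _ "[]"] exI[of _ "e # cs"]) auto
  next
    case False
    then have "p \<in> insert (pt (snd L) f w) ((\<lambda>(f, z, w). pt (snd L) f w) ` set cs)"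
      using Cons.prems e by auto
    moreover have "chain L (pt (snd L) f w) b cs" using Cons.prems e by auto
    ultimately obtain ds es where "chain L (pt (snd L) f w) p ds" "chain L p b es"
        "chain_len ds + chain_len es = chain_len cs" using Cons.IH by blast
    then show ?thesis using Cons.prems e
      by (intro exI[of _ "(f, z, w) # ds"] exI[of _ es]) auto
  qed
qed

lemma chain_map:
  assumes "cell_iso_map L D L' \<phi>"
  shows "chain L a b cs \<Longrightarrow> insert a ((\<lambda>(f, z, w). pt (snd L) f w) ` set cs) \<subseteq> D \<Longrightarrow>
   \<exists>cs'. chain L' (\<phi> a) (\<phi> b) cs' \<and> chain_len cs' = chain_len cs"
proof (induction cs arbitrary: a)
  case Nil then show ?case by (intro exI[of _ "[]"]) auto
next
  case (Cons e cs)
  obtain f z w where e: "e = (f, z, w)" by (cases e) auto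
  have f: "f \<in> fst L" and zw: "z \<in> Pent" "w \<in> Pent" and a: "pt (snd L) f z = a"
    and tl: "chain L (pt (snd L) f w) b cs" using Cons.prems e by auto
  have inD: "pt (snd L) f z \<in> D" "pt (snd L) f w \<in> D" using Cons.prems e a by auto
  obtain g T where g: "g \<in> fst L'" and T: "\<forall>z \<in> Pent. \<forall>w \<in> Pent.
         pt (snd L) f z \<in> D \<longrightarrow> pt (snd L) f w \<in> D \<longrightarrow>
         T z \<in> Pent \<and> \<phi> (pt (snd L) f z) = pt (snd L') g (T z) \<and> dist (T z) (T w) = dist z w"
    using assms f unfolding cell_iso_map_def by blast
  have T1: "T z \<in> Pent" "\<phi> (pt (snd L) f z) = pt (snd L') g (T z)" "dist (T z) (T w) = dist z w"
    using T zw inD by blast+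
  have T2: "T w \<in> Pent" "\<phi> (pt (snd L) f w) = pt (snd L') g (T w)"
    using T zw inD by blast+
  have "insert (pt (snd L) f w) ((\<lambda>(f, z, w). pt (snd L) f w) ` set cs) \<subseteq> D"
    using Cons.prems e by auto
  then obtain cs' where cs': "chain L' (\<phi> (pt (snd L) f w)) (\<phi> b) cs'" "chain_len cs' = chain_len cs"
    using Cons.IH tl by blast
  show ?case
    by (intro exI[of _ "(g, T z, T w) # cs'"]) (use g T1 T2 cs' a e in auto)
qed

definition CL :: "('v, 'f) tiling \<Rightarrow> ('v, 'f) apt \<Rightarrow> ('v, 'f) apt \<Rightarrow> real set" where
  "CL L a b = {chain_len cs | cs. chain L a b cs}"

lemma adist_CL: "adist L a b = Inf (CL L a b)"
  by (simp add: adist_def CL_def)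

lemma bdd_CL: "bdd_below (CL L a b)"
  unfolding CL_def by (rule bdd_belowI[of _ 0]) (auto simp: chain_len_nonneg)

lemma adist_le: "chain L a b cs \<Longrightarrow> adist L a b \<le> chain_len cs"
proof -
  assume "chain L a b cs"
  then have "chain_len cs \<in> CL L a b" unfolding CL_def by blast
  then show ?thesis unfolding adist_CL by (rule cInf_lower[OF _ bdd_CL])
qed

lemma adist_nonneg: "chain L a b cs \<Longrightarrow> 0 \<le> adist L a b"
  unfolding adist_CL by (rule cInf_greatest) (auto simp: CL_def chain_len_nonneg)

lemma adist_refl: "adist L a a = 0"
proof -
  have "adist L a a \<le> 0" using adist_le[of L a a "[]"] by simp
  moreover have "0 \<le> adist L a a" using adist_nonneg[of L a a "[]"] by simp
  ultimately show ?thesis by simp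
qed

lemma adist_approx:
  assumes "chain L a b cs0" "0 < d"
  shows "\<exists>cs. chain L a b cs \<and> chain_len cs < adist L a b + d"
proof (rule ccontr)
  assume "\<not> ?thesis"
  then have "\<forall>x \<in> CL L a b. adist L a b + d \<le> x" by (auto simp: CL_def)
  then have "adist L a b + d \<le> Inf (CL L a b)"
    using assms(1) by (intro cInf_greatest) (auto simp: CL_def)
  then show False using assms(2) by (simp add: adist_CL)
qed

lemma CL_sym: "CL L a b = CL L b a"
proof -
  have "CL L a b \<subseteq> CL L b a" for a b
  proof
    fix x assume "x \<in> CL L a b"
    then obtain cs where "chain L a b cs" "x = chain_len cs" by (auto simp: CL_def)
    then have "chain L b a (rchain cs)" "x = chain_len (rchain cs)" by (auto intro: chain_rev)
    then show "x \<in> CL L b a" unfolding CL_def by blast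
  qed
  then show ?thesis by blast
qed

lemma adist_sym: "adist L a b = adist L b a"
  by (simp add: adist_CL CL_sym)

lemma adist_tri:
  assumes "chain L a b cs0" "chain L b c ds0"
  shows "adist L a c \<le> adist L a b + adist L b c"
proof (rule ccontr)
  assume H: "\<not> adist L a c \<le> adist L a b + adist L b c"
  define d where "d = (adist L a c - (adist L a b + adist L b c)) / 2"
  have d: "0 < d" using H by (simp add: d_def)
  have d2: "2 * d = adist L a c - (adist L a b + adist L b c)" unfolding d_def by simp
  obtain cs where cs: "chain L a b cs" "chain_len cs < adist L a b + d"
    using adist_approx[OF assms(1) d] by blast
  obtain ds where ds: "chain L b c ds" "chain_len ds < adist L b c + d"
    using adist_approx[OF assms(2) d] by blast
  have "adist L a c \<le> chain_len (cs @ ds)" by (rule adist_le[OF chain_append[OF cs(1) ds(1)]])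
  then have "adist L a c \<le> chain_len cs + chain_len ds" by simp
  then show False using cs(2) ds(2) d2 by linarith
qed

lemma connected_tiling:
  assumes "pent_tiling L" "a \<in> Pts L" "b \<in> Pts L"
  shows "\<exists>cs. chain L a b cs"
proof -
  define P where "P U = (U \<subseteq> Pts L \<and>
      (\<forall>f \<in> fst L. openin (top_of_set Pent) {z \<in> Pent. pt (snd L) f z \<in> U}))" for U
  have ist: "istopology P"
    unfolding istopology_def
  proof (intro conjI allI impI)
    fix S T assume "P S" "P T"
    then show "P (S \<inter> T)" unfolding P_def
    proof (intro conjI ballI)
      fix f assume f: "f \<in> fst L" and "S \<subseteq> Pts L \<and> (\<forall>f\<in>fst L. openin (top_of_set Pent) {z \<in> Pent. pt (snd L) f z \<in> S})"
        "T \<subseteq> Pts L \<and> (\<forall>f\<in>fst L. openin (top_of_set Pent) {z \<in> Pent. pt (snd L) f z \<in> T})"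
      then have "openin (top_of_set Pent) ({z \<in> Pent. pt (snd L) f z \<in> S} \<inter> {z \<in> Pent. pt (snd L) f z \<in> T})"
        by blast
      moreover have "{z \<in> Pent. pt (snd L) f z \<in> S} \<inter> {z \<in> Pent. pt (snd L) f z \<in> T}
          = {z \<in> Pent. pt (snd L) f z \<in> S \<inter> T}" by auto
      ultimately show "openin (top_of_set Pent) {z \<in> Pent. pt (snd L) f z \<in> S \<inter> T}" by simp
    qed (use \<open>P S\<close> in \<open>auto simp: P_def\<close>)
  next
    fix K assume K: "\<forall>k\<in>K. P k"
    show "P (\<Union>K)" unfolding P_def
    proof (intro conjI ballI)
      show "\<Union>K \<subseteq> Pts L" using K by (auto simp: P_def)
      fix f assume f: "f \<in> fst L"
      have "openin (top_of_set Pent) (\<Union>k\<in>K. {z \<in> Pent. pt (snd L) f z \<in> k})"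
        using K f by (intro openin_Union) (auto simp: P_def)
      moreover have "(\<Union>k\<in>K. {z \<in> Pent. pt (snd L) f z \<in> k}) = {z \<in> Pent. pt (snd L) f z \<in> \<Union>K}"
        by auto
      ultimately show "openin (top_of_set Pent) {z \<in> Pent. pt (snd L) f z \<in> \<Union>K}" by simp
    qed
  qed
  have op: "openin (cw_top L) = P"
    unfolding cw_top_def P_def[abs_def] using ist unfolding P_def[abs_def] by simp
  have ptP: "pt (snd L) f z \<in> Pts L" if "f \<in> fst L" "z \<in> Pent" for f z
    using that by (auto simp: Pts_def)
  have opPent: "openin (top_of_set Pent) Pent" by simp
  have "P (Pts L)" unfolding P_def
  proof (intro conjI ballI)
    fix f assume f: "f \<in> fst L"
    have "{z \<in> Pent. pt (snd L) f z \<in> Pts L} = Pent" using ptP[OF f] by blast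
    then show "openin (top_of_set Pent) {z \<in> Pent. pt (snd L) f z \<in> Pts L}" using opPent by simp
  qed simp
  then have t1: "Pts L \<subseteq> topspace (cw_top L)" using openin_subset[of "cw_top L" "Pts L"] op by simp
  have "P (topspace (cw_top L))" using openin_topspace[of "cw_top L"] op by simp
  then have t2: "topspace (cw_top L) \<subseteq> Pts L" unfolding P_def by blast
  have tsp: "topspace (cw_top L) = Pts L" using t1 t2 by (rule subset_antisym[rotated])
  have "connected_space (euclidean :: complex topology)"
    using connectedin_topspace[of "euclidean :: complex topology"]
      connectedin_iff_connected[of "UNIV :: complex set"] connected_UNIV[where 'a=complex]
    by simp
  then have conn: "connected_space (cw_top L)"
  proof -
    have "cw_top L homeomorphic_space (euclidean :: complex topology)"
      using assms(1) unfolding pent_tiling_def by (rule conjunct2)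
    then have "connected_space (cw_top L) = connected_space (euclidean :: complex topology)"
      by (rule homeomorphic_connected_space)
    then show ?thesis using \<open>connected_space (euclidean :: complex topology)\<close> by simp
  qed
  define R where "R = {p. \<exists>cs. chain L a p cs}"
  have RP: "R \<subseteq> Pts L" by (auto simp: R_def intro: chain_Pts[OF _ assms(2)])
  have key: "pt (snd L) f w \<in> R" if H: "f \<in> fst L" "z \<in> Pent" "w \<in> Pent" "pt (snd L) f z \<in> R" for f z w
  proof -
    obtain cs where "chain L a (pt (snd L) f z) cs" using H(4) by (auto simp: R_def)
    moreover have "chain L (pt (snd L) f z) (pt (snd L) f w) [(f, z, w)]" using H by simp
    ultimately show ?thesis unfolding R_def using chain_append by blast
  qed
  have pre: "{z \<in> Pent. pt (snd L) f z \<in> R} = {} \<or> {z \<in> Pent. pt (snd L) f z \<in> R} = Pent"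
    if "f \<in> fst L" for f
    using key[OF that] by blast
  have oR: "openin (cw_top L) R"
    unfolding op P_def
  proof (intro conjI ballI)
    fix f assume f: "f \<in> fst L"
    from pre[OF f] show "openin (top_of_set Pent) {z \<in> Pent. pt (snd L) f z \<in> R}"
    proof
      assume e: "{z \<in> Pent. pt (snd L) f z \<in> R} = {}"
      show ?thesis unfolding e by (rule openin_empty)
    next
      assume e: "{z \<in> Pent. pt (snd L) f z \<in> R} = Pent"
      show ?thesis unfolding e by (rule opPent)
    qed
  qed (rule RP)
  have pre2: "{z \<in> Pent. pt (snd L) f z \<in> Pts L - R} = Pent - {z \<in> Pent. pt (snd L) f z \<in> R}"
    if "f \<in> fst L" for f using ptP[OF that] by auto
  have oR2: "openin (cw_top L) (Pts L - R)"
    unfolding op P_def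
  proof (intro conjI ballI)
    fix f assume f: "f \<in> fst L"
    show "openin (top_of_set Pent) {z \<in> Pent. pt (snd L) f z \<in> Pts L - R}"
      using pre[OF f]
    proof
      assume e: "{z \<in> Pent. pt (snd L) f z \<in> R} = {}"
      show ?thesis unfolding pre2[OF f] e Diff_empty by (rule opPent)
    next
      assume e: "{z \<in> Pent. pt (snd L) f z \<in> R} = Pent"
      show ?thesis unfolding pre2[OF f] e Diff_cancel by (rule openin_empty)
    qed
  qed auto
  have "a \<in> R" unfolding R_def by (auto intro: exI[of _ "[]"])
  have "R \<union> (Pts L - R) = topspace (cw_top L)" "R \<inter> (Pts L - R) = {}"
    using RP tsp by auto
  then have "Pts L - R = {}"
    using conn oR oR2 \<open>a \<in> R\<close> unfolding connected_space_eq by blast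
  then show ?thesis using assms(3) by (auto simp: R_def)
qed

lemma lemG:
  assumes conn: "\<And>p q. p \<in> Pts L \<Longrightarrow> q \<in> Pts L \<Longrightarrow> \<exists>cs. chain L p q cs"
    and cim: "cell_iso_map L (aball L c R) L' \<phi>"
    and yP: "y \<in> Pts L" and zP: "z \<in> Pts L" and cP: "c \<in> Pts L"
    and S: "adist L c y + adist L c z + adist L y z < 2 * R"
  shows "adist L' (\<phi> y) (\<phi> z) \<le> adist L y z"
proof (rule field_le_epsilon)
  fix e :: real assume e: "0 < e"
  define d where "d = min e (2*R - (adist L c y + adist L c z + adist L y z))"
  have d: "0 < d" using e S by (simp add: d_def)
  obtain cs0 where "chain L y z cs0" using conn yP zP by blast
  then obtain cs where cs: "chain L y z cs" "chain_len cs < adist L y z + d"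
    using adist_approx d by blast
  have nodes: "insert y ((\<lambda>(f, u, w). pt (snd L) f w) ` set cs) \<subseteq> aball L c R"
  proof
    fix p assume p: "p \<in> insert y ((\<lambda>(f, u, w). pt (snd L) f w) ` set cs)"
    obtain ds es where ds: "chain L y p ds" "chain L p z es" "chain_len ds + chain_len es = chain_len cs"
      using chain_split[OF cs(1) p] by blast
    have pP: "p \<in> Pts L" using chain_Pts[OF ds(1) yP] .
    obtain c1 where c1: "chain L c y c1" using conn cP yP by blast
    obtain c2 where c2: "chain L c z c2" using conn cP zP by blast
    have "adist L c p \<le> adist L c y + adist L y p" using adist_tri[OF c1 ds(1)] .
    moreover have "adist L y p \<le> chain_len ds" using adist_le[OF ds(1)] .
    moreover have "adist L c p \<le> adist L c z + adist L z p" using adist_tri[OF c2 chain_rev[OF ds(2)]] .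
    moreover have "adist L z p \<le> chain_len es" using adist_le[OF chain_rev[OF ds(2)]] by simp
    moreover have "d \<le> 2*R - (adist L c y + adist L c z + adist L y z)" by (simp add: d_def)
    ultimately have "adist L c p \<le> R" using ds(3) cs(2) by linarith
    then show "p \<in> aball L c R" using pP by (simp add: aball_def)
  qed
  obtain cs' where cs': "chain L' (\<phi> y) (\<phi> z) cs'" "chain_len cs' = chain_len cs"
    using chain_map[OF cim cs(1) nodes] by blast
  have "adist L' (\<phi> y) (\<phi> z) \<le> chain_len cs" using adist_le[OF cs'(1)] cs'(2) by simp
  moreover have "d \<le> e" by (simp add: d_def)
  ultimately show "adist L' (\<phi> y) (\<phi> z) \<le> adist L y z + e" using cs(2) by linarith
qed

theorem lemma2p5:
  fixes L :: "('v1, 'f1) tiling" and L' :: "('v2, 'f2) tiling"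
    and x :: "('v1, 'f1) apt" and x' :: "('v2, 'f2) apt" and \<epsilon> :: real
    and \<phi> :: "('v1, 'f1) apt \<Rightarrow> ('v2, 'f2) apt" and \<phi>' :: "('v2, 'f2) apt \<Rightarrow> ('v1, 'f1) apt"
  assumes "pent_tiling L" "loc_iso_K L" "pent_tiling L'" "loc_iso_K L'"
    and "x \<in> Pts L" "x' \<in> Pts L'"
    and "0 < \<epsilon>" "\<epsilon> \<le> 1 / sqrt 2"
    and "acont_on L (aball L x (1 / \<epsilon>)) L' \<phi>" "cell_iso_map L (aball L x (1 / \<epsilon>)) L' \<phi>"
    and "acont_on L' (aball L' x' (1 / \<epsilon>)) L \<phi>'" "cell_iso_map L' (aball L' x' (1 / \<epsilon>)) L \<phi>'"
    and "adist L' (\<phi> x) x' \<le> \<epsilon>" "adist L (\<phi>' x') x \<le> \<epsilon>"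
    and "\<forall>y \<in> aball L' x' (1 / \<epsilon>). \<phi>' y \<in> aball L x (1 / \<epsilon>) \<longrightarrow> \<phi> (\<phi>' y) = y"
    and "\<forall>y \<in> aball L x (1 / \<epsilon>). \<phi> y \<in> aball L' x' (1 / \<epsilon>) \<longrightarrow> \<phi>' (\<phi> y) = y"
  shows "\<forall>y \<in> aball L x (1 / \<epsilon> / 6). \<forall>z \<in> aball L x (1 / \<epsilon> / 6).
           adist L' (\<phi> y) (\<phi> z) = adist L y z"
  proof -
  define r where "r = 1 / \<epsilon>"
  have rr: "1 / \<epsilon> = r" by (simp add: r_def)
  have r: "0 < r" using assms(7) by (simp add: r_def)
  have er: "\<epsilon> * r = 1" using assms(7) by (simp add: r_def)
  have "\<epsilon> * \<epsilon> \<le> (1 / sqrt 2) * (1 / sqrt 2)"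
    using assms(7,8) by (intro mult_mono) auto
  then have ee: "\<epsilon> * \<epsilon> \<le> 1/2" by simp
  have "\<epsilon> = (\<epsilon> * \<epsilon>) * r" using er by (simp add: algebra_simps)
  also have "\<dots> \<le> (1/2) * r" using ee r by (intro mult_right_mono) auto
  finally have er2: "\<epsilon> \<le> r / 2" by simp
  note A = assms[unfolded rr]
  have connL: "\<exists>cs. chain L p q cs" if "p \<in> Pts L" "q \<in> Pts L" for p q
    using connected_tiling[OF assms(1) that] .
  have connL': "\<exists>cs. chain L' p q cs" if "p \<in> Pts L'" "q \<in> Pts L'" for p q
    using connected_tiling[OF assms(3) that] .
  have nnL: "0 \<le> adist L p q" if "p \<in> Pts L" "q \<in> Pts L" for p q
    using connL[OF that] adist_nonneg by blast
  have nnL': "0 \<le> adist L' p q" if "p \<in> Pts L'" "q \<in> Pts L'" for p q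
    using connL'[OF that] adist_nonneg by blast
  have xP: "x \<in> Pts L" and x'P: "x' \<in> Pts L'" using assms(5,6) .
  have cim: "cell_iso_map L (aball L x r) L' \<phi>" using A(10) .
  have cim': "cell_iso_map L' (aball L' x' r) L \<phi>'" using A(12) .
  have phP: "\<phi> p \<in> Pts L'" if "p \<in> aball L x r" for p
  proof -
    have "\<forall>y \<in> aball L x r. \<phi> y \<in> Pts L' \<and> cdim (\<phi> y) = cdim y"
      using cim unfolding cell_iso_map_def by (rule conjunct1)
    then show ?thesis using that by blast
  qed
  have small: "p \<in> Pts L \<and> adist L x p \<le> r/6 \<and> 0 \<le> adist L x p" if "p \<in> aball L x (r/6)" for p
    using that nnL[OF xP] by (auto simp: aball_def)
  have big: "p \<in> aball L x r" if "p \<in> aball L x (r/6)" for p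
    using small[OF that] r by (auto simp: aball_def)
  have fwd: "adist L' (\<phi> y) (\<phi> z) \<le> adist L y z"
    if y: "y \<in> aball L x (r/6)" and z: "z \<in> aball L x (r/6)" for y z
  proof -
    obtain c1 where c1: "chain L y x c1" using connL[OF _ xP] small[OF y] by blast
    obtain c2 where c2: "chain L x z c2" using connL[OF xP] small[OF z] by blast
    have yz: "adist L y z \<le> adist L y x + adist L x z" using adist_tri[OF c1 c2] .
    then have "adist L y z \<le> adist L x y + adist L x z" by (simp add: adist_sym)
    then have "adist L x y + adist L x z + adist L y z < 2 * r"
      using small[OF y] small[OF z] r by linarith
    then show ?thesis
      using lemG[OF connL cim _ _ xP] small[OF y] small[OF z] by blast
  qed
  have "adist L x x \<le> r/6" using r by (simp add: adist_refl)
  then have xs: "x \<in> aball L x (r/6)" using xP unfolding aball_def by blast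
  have bk: "\<phi>' (\<phi> y) = y \<and> \<phi> y \<in> aball L' x' r \<and> adist L' x' (\<phi> y) \<le> \<epsilon> + r/6"
    if y: "y \<in> aball L x (r/6)" for y
  proof -
    have yP: "\<phi> y \<in> Pts L'" using phP[OF big[OF y]] .
    have xP': "\<phi> x \<in> Pts L'" using phP[OF big[OF xs]] .
    obtain c1 where c1: "chain L' x' (\<phi> x) c1" using connL'[OF x'P xP'] by blast
    obtain c2 where c2: "chain L' (\<phi> x) (\<phi> y) c2" using connL'[OF xP' yP] by blast
    have "adist L' x' (\<phi> y) \<le> adist L' x' (\<phi> x) + adist L' (\<phi> x) (\<phi> y)"
      using adist_tri[OF c1 c2] .
    moreover have "adist L' x' (\<phi> x) \<le> \<epsilon>" using A(13) by (simp add: adist_sym)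
    moreover have "adist L' (\<phi> x) (\<phi> y) \<le> adist L x y" using fwd[OF xs y] .
    ultimately have d: "adist L' x' (\<phi> y) \<le> \<epsilon> + r/6" using small[OF y] by linarith
    then have "\<phi> y \<in> aball L' x' r" using yP er2 r by (simp add: aball_def)
    moreover have "\<phi>' (\<phi> y) = y" using A(16) big[OF y] calculation by blast
    ultimately show ?thesis using d by blast
  qed
  show ?thesis unfolding rr
  proof (intro ballI)
    fix y z assume y: "y \<in> aball L x (r/6)" and z: "z \<in> aball L x (r/6)"
    have f: "adist L' (\<phi> y) (\<phi> z) \<le> adist L y z" using fwd[OF y z] .
    obtain c1 where c1: "chain L y x c1" using connL[OF _ xP] small[OF y] by blast
    obtain c2 where c2: "chain L x z c2" using connL[OF xP] small[OF z] by blast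
    have yz: "adist L y z \<le> adist L y x + adist L x z" using adist_tri[OF c1 c2] .
    then have yz2: "adist L y z \<le> adist L x y + adist L x z" by (simp add: adist_sym)
    have yP': "\<phi> y \<in> Pts L'" and zP': "\<phi> z \<in> Pts L'" using phP big y z by blast+
    have s1: "adist L' x' (\<phi> y) \<le> \<epsilon> + r/6" using bk[OF y] by blast
    have s2: "adist L' x' (\<phi> z) \<le> \<epsilon> + r/6" using bk[OF z] by blast
    have "adist L' x' (\<phi> y) + adist L' x' (\<phi> z) + adist L' (\<phi> y) (\<phi> z) < 2 * r"
      using s1 s2 f yz2 small[OF y] small[OF z] er2 r by linarith
    note G = lemG[OF connL' cim' yP' zP' x'P this]
    then have "adist L (\<phi>' (\<phi> y)) (\<phi>' (\<phi> z)) \<le> adist L' (\<phi> y) (\<phi> z)" .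
    moreover have "\<phi>' (\<phi> y) = y" "\<phi>' (\<phi> z) = z" using bk[OF y] bk[OF z] by blast+
    ultimately have "adist L y z \<le> adist L' (\<phi> y) (\<phi> z)" by simp
    then show "adist L' (\<phi> y) (\<phi> z) = adist L y z" using f by simp
  qed
qed

end
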